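(* Suppose Assumption 2 holds with nonnegative functions $a,b$ on $\mathbb{X}$. For $N\ge1$ define \[ K_N(x_1)=\sum_{n=1}^N\frac1{(n-1)!}\int\mathrm{d}|\mu|(x_2)\cdots\int\mathrm{d}|\mu|(x_n)\prod_{i=1}^n e^{2b(x_i)}\sum_{G\in\mathcal{T}_n}\prod_{\{i,j\}\in G}|\zeta(x_i,x_j)| \] (the $n=1$ term being $e^{2b(x_1)}$). Then for every $N\ge1$ and almost all $x\in\mathbb{X}$, $K_N(x)\le e^{a(x)+2b(x)}$.
   Context: $(\mathbb{X},\mathcal{X},\mu)$ is a measure space with complex measure $\mu$ and total variation $|\mu|$; $\zeta$ is a complex measurable symmetric function on $\mathbb{X}\times\mathbb{X}$. $b$ is a nonnegative measurable function on $\mathbb{X}$. Assumption 2: $a$ is a nonnegative function on $\mathbb{X}$ such that $\int\mathrm{d}|\mu|(y)\,|\zeta(x,y)|\,e^{a(y)+2b(y)}\le a(x)$ for almost all $x$. $\mathcal{T}_n$ is the set of trees on vertex set $\{1,\dots,n\}$, products over edges. *)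

theory Defs
  imports "HOL-Analysis.Analysis"
begin

text \<open>Simple graphs on a vertex set of naturals, edges as two-element sets.\<close>

definition adj :: "nat set set \<Rightarrow> (nat \<times> nat) set" where
  "adj E = {(i, j). {i, j} \<in> E}"

text \<open>A tree on V: a simple graph on V which is connected and acyclic
  (acyclic = no edge lies on a cycle, i.e. removing any edge disconnects its endpoints).\<close>

definition is_tree :: "nat set \<Rightarrow> nat set set \<Rightarrow> bool" where
  "is_tree V E \<longleftrightarrow>
     E \<subseteq> {{i, j} | i j. i \<in> V \<and> j \<in> V \<and> i \<noteq> j} \<and>
     (\<forall>i\<in>V. \<forall>j\<in>V. (i, j) \<in> (adj E)\<^sup>*) \<and>
     (\<forall>e\<in>E. \<forall>i j. e = {i, j} \<longrightarrow> (i, j) \<notin> (adj (E - {e}))\<^sup>*)"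

definition trees :: "nat \<Rightarrow> nat set set set" where
  "trees n = {E. is_tree {1..n} E}"

text \<open>K_N(x1): the n-th term integrates over x_2..x_n w.r.t. the product of
  the total variation measure M = |mu|; the vector (x_1,...,x_n) is y(1 := x1).
  Edges {i,j} are evaluated as |zeta(x_min, x_max)| (zeta is symmetric).\<close>

definition K :: "'a measure \<Rightarrow> ('a \<Rightarrow> 'a \<Rightarrow> complex) \<Rightarrow> ('a \<Rightarrow> real) \<Rightarrow> nat \<Rightarrow> 'a \<Rightarrow> ennreal" where
  "K M \<zeta> b N x1 =
     (\<Sum>n = 1..N. ennreal (1 / fact (n - 1)) *
        (\<integral>\<^sup>+ y. ennreal
            ((\<Prod>i = 1..n. exp (2 * b ((y(1 := x1)) i))) *
             (\<Sum>G\<in>trees n. \<Prod>e\<in>G. cmod (\<zeta> ((y(1 := x1)) (Min e)) ((y(1 := x1)) (Max e)))))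
         \<partial>(PiM {2..n} (\<lambda>_. M))))"

end

theory Submission
  imports Defs
begin


definition Valid :: "nat set \<Rightarrow> nat set \<Rightarrow> (nat \<Rightarrow> nat) set" where
  "Valid R S = {p \<in> S \<rightarrow>\<^sub>E (R \<union> S). \<exists>d::nat\<Rightarrow>nat. \<forall>s\<in>S. d (p s) < d s}"

definition TT :: "nat set \<Rightarrow> nat set \<Rightarrow> (nat \<Rightarrow> nat \<Rightarrow> ennreal) \<Rightarrow> ennreal" where
  "TT R S W = (\<Sum>p\<in>Valid R S. \<Prod>s\<in>S. W s (p s))"

lemma finite_Valid: "finite R \<Longrightarrow> finite S \<Longrightarrow> finite (Valid R S)"
  unfolding Valid_def by (rule finite_subset[OF _ finite_PiE[of S "\<lambda>_. R \<union> S"]]) auto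

lemma Valid_empty_S: "Valid R {} = {\<lambda>_. undefined}"
  unfolding Valid_def by auto

lemma TT_empty_S: "TT R {} W = 1"
  unfolding TT_def Valid_empty_S by simp

lemma Valid_empty_R: assumes "finite S" "S \<noteq> {}" shows "Valid {} S = {}"
proof (rule ccontr)
  assume "Valid {} S \<noteq> {}"
  then obtain p where "p \<in> Valid {} S" by blast
  then have p: "p \<in> S \<rightarrow>\<^sub>E S" and "\<exists>d::nat\<Rightarrow>nat. \<forall>s\<in>S. d (p s) < d s"
    unfolding Valid_def by auto
  then obtain d :: "nat \<Rightarrow> nat" where d: "\<forall>s\<in>S. d (p s) < d s" by blast
  have "Min (d ` S) \<in> d ` S" using assms by simp
  then obtain s where s1: "s \<in> S" "d s = Min (d ` S)" by auto
  have s: "s \<in> S" "\<forall>t\<in>S. d s \<le> d t" using s1 assms by auto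
  then show False using p d by (metis PiE_mem leD)
qed

lemma TT_empty_R: "finite S \<Longrightarrow> S \<noteq> {} \<Longrightarrow> TT {} S W = 0"
  unfolding TT_def by (simp add: Valid_empty_R)

lemma TT_decomp:
  assumes fin: "finite R" "finite S" and disj: "R \<inter> S = {}"
  shows "TT R S W \<le> (\<Sum>S1\<in>Pow S. (\<Prod>s\<in>S1. \<Sum>r\<in>R. W s r) * TT S1 (S - S1) W)"
proof -
  let ?V = "Valid R S"
  let ?g = "\<lambda>p. {s\<in>S. p s \<in> R}"
  let ?f = "\<lambda>p. \<Prod>s\<in>S. W s (p s)"
  have "TT R S W = (\<Sum>S1\<in>Pow S. \<Sum>p\<in>{p\<in>?V. ?g p = S1}. ?f p)"
    unfolding TT_def
  proof (rule sum.group[symmetric])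
    show "finite (Valid R S)" using fin by (rule finite_Valid)
    show "finite (Pow S)" using fin by simp
    show "?g ` Valid R S \<subseteq> Pow S" by blast
  qed
  also have "\<dots> \<le> (\<Sum>S1\<in>Pow S. (\<Prod>s\<in>S1. \<Sum>r\<in>R. W s r) * TT S1 (S - S1) W)"
  proof (rule sum_mono)
    fix S1 assume S1: "S1 \<in> Pow S"
    let ?X = "{p\<in>?V. ?g p = S1}"
    let ?phi = "\<lambda>p. (restrict p S1, restrict p (S - S1))"
    let ?Y = "(S1 \<rightarrow>\<^sub>E R) \<times> Valid S1 (S - S1)"
    let ?h = "\<lambda>(q, p'). (\<Prod>s\<in>S1. W s (q s)) * (\<Prod>s\<in>S - S1. W s (p' s))"
    have finS1: "finite S1" using S1 fin finite_subset by auto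
    have inj: "inj_on ?phi ?X"
    proof (rule inj_onI)
      fix p p' assume pX: "p \<in> ?X" and pX': "p' \<in> ?X" and eq: "?phi p = ?phi p'"
      have pe: "p \<in> S \<rightarrow>\<^sub>E R \<union> S" "p' \<in> S \<rightarrow>\<^sub>E R \<union> S"
        using pX pX' unfolding Valid_def by auto
      show "p = p'"
      proof
        fix s show "p s = p' s"
        proof (cases "s \<in> S")
          case True
          show ?thesis
          proof (cases "s \<in> S1")
            case True
            then show ?thesis using eq by (metis fst_conv restrict_apply')
          next
            case False
            with \<open>s \<in> S\<close> have "s \<in> S - S1" by blast
            then show ?thesis using eq by (metis snd_conv restrict_apply')
          qed
        next
          case False
          then show ?thesis using pe by (metis PiE_arb)
        qed
      qed
    qed
    have img: "?phi ` ?X \<subseteq> ?Y"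
    proof
      fix y assume "y \<in> ?phi ` ?X"
      then obtain p where pX: "p \<in> ?X" and y: "y = ?phi p" by blast
      then have p1: "p \<in> S \<rightarrow>\<^sub>E R \<union> S" "?g p = S1" and "\<exists>d::nat\<Rightarrow>nat. \<forall>s\<in>S. d (p s) < d s"
        unfolding Valid_def by auto
      then obtain d :: "nat \<Rightarrow> nat" where "\<forall>s\<in>S. d (p s) < d s" by blast
      with p1 have p: "p \<in> S \<rightarrow>\<^sub>E R \<union> S" "\<forall>s\<in>S. d (p s) < d s" "?g p = S1" by auto
      have "restrict p S1 \<in> S1 \<rightarrow>\<^sub>E R" using p(3) by auto
      moreover have "restrict p (S - S1) \<in> Valid S1 (S - S1)"
      proof -
        have "restrict p (S - S1) \<in> (S - S1) \<rightarrow>\<^sub>E (S1 \<union> (S - S1))"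
        proof (rule PiE_I)
          fix s assume s: "s \<in> S - S1"
          then have "p s \<in> R \<union> S" using p(1) by auto
          moreover have "p s \<notin> R" using s p(3) by auto
          ultimately show "restrict p (S - S1) s \<in> S1 \<union> (S - S1)" using s by auto
        qed auto
        moreover have "\<forall>s\<in>S - S1. d (restrict p (S - S1) s) < d s" using p(2) by auto
        ultimately show ?thesis unfolding Valid_def by blast
      qed
      ultimately show "y \<in> ?Y" using y by auto
    qed
    have "(\<Sum>p\<in>?X. ?f p) = (\<Sum>p\<in>?X. ?h (?phi p))"
    proof (rule sum.cong[OF refl])
      fix p assume "p \<in> ?X"
      then have "S1 \<subseteq> S" using S1 by auto
      then have "?f p = (\<Prod>s\<in>S1. W s (p s)) * (\<Prod>s\<in>S - S1. W s (p s))"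
        using fin prod.subset_diff[of S1 S "\<lambda>s. W s (p s)"] by (simp add: mult.commute)
      then show "?f p = ?h (?phi p)" by simp
    qed
    also have "\<dots> = (\<Sum>y\<in>?phi ` ?X. ?h y)" by (simp add: sum.reindex[OF inj])
    also have "\<dots> \<le> (\<Sum>y\<in>?Y. ?h y)"
      by (rule sum_mono2[OF _ img]) (auto simp: finite_Valid finS1 fin finite_PiE)
    also have "\<dots> = (\<Sum>q\<in>S1 \<rightarrow>\<^sub>E R. \<Prod>s\<in>S1. W s (q s)) * TT S1 (S - S1) W"
      unfolding TT_def sum.cartesian_product[symmetric] sum_product by simp
    also have "\<dots> = (\<Prod>s\<in>S1. \<Sum>r\<in>R. W s r) * TT S1 (S - S1) W"
      using prod_sum_PiE[of S1 "\<lambda>_. R" W] finS1 fin by simp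
    finally show "(\<Sum>p\<in>?X. ?f p) \<le> (\<Prod>s\<in>S1. \<Sum>r\<in>R. W s r) * TT S1 (S - S1) W" .
  qed
  finally show ?thesis .
qed



lemma adj_sym: "(i, j) \<in> adj E \<Longrightarrow> (j, i) \<in> adj E"
  unfolding adj_def by (auto simp: insert_commute)

lemma adj_rtrancl_sym: "(i, j) \<in> (adj E)\<^sup>* \<Longrightarrow> (j, i) \<in> (adj E)\<^sup>*"
proof (induction rule: rtrancl_induct)
  case (step y z)
  then show ?case using adj_sym by (meson converse_rtrancl_into_rtrancl)
qed simp

lemma tree_parent:
  assumes T: "is_tree V E" and r: "r \<in> V" and finV: "finite V"
  shows "\<exists>p \<in> Valid {r} (V - {r}). E = (\<lambda>v. {v, p v}) ` (V - {r}) \<and> inj_on (\<lambda>v. {v, p v}) (V - {r})"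
proof -
  let ?A = "adj E"
  have Esub: "E \<subseteq> {{i, j} | i j. i \<in> V \<and> j \<in> V \<and> i \<noteq> j}"
    and conn: "\<forall>i\<in>V. \<forall>j\<in>V. (i, j) \<in> ?A\<^sup>*"
    and bridge: "\<forall>e\<in>E. \<forall>i j. e = {i, j} \<longrightarrow> (i, j) \<notin> (adj (E - {e}))\<^sup>*"
    using T unfolding is_tree_def by auto
  have AV: "(i, j) \<in> ?A \<Longrightarrow> i \<in> V \<and> j \<in> V \<and> i \<noteq> j" for i j
    using Esub unfolding adj_def by (auto simp: doubleton_eq_iff)
  define d where "d v = (LEAST k. (v, r) \<in> ?A ^^ k)" for v
  have dex: "(v, r) \<in> ?A ^^ d v" if "v \<in> V" for v
  proof -
    from conn that r obtain k where "(v, r) \<in> ?A ^^ k" by (auto simp: rtrancl_power)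
    then show ?thesis unfolding d_def by (rule LeastI)
  qed
  have dmin: "(v, r) \<in> ?A ^^ k \<Longrightarrow> d v \<le> k" for v k
    unfolding d_def by (rule Least_le)
  have d0: "d v = 0 \<longleftrightarrow> v = r" if "v \<in> V" for v
    using dex[OF that] dmin[of r 0] by (cases "d v") auto
  have dnb: "d u \<le> Suc (d v)" if "(u, v) \<in> ?A" for u v
    using dmin[OF relpow_Suc_I2[OF that dex]] AV[OF that] by auto
  have pex: "\<exists>u. (v, u) \<in> ?A \<and> Suc (d u) = d v" if "v \<in> V" "v \<noteq> r" for v
  proof -
    have "d v \<noteq> 0" using d0 that by auto
    then obtain k where k: "d v = Suc k" using not0_implies_Suc by blast
    have "(v, r) \<in> ?A ^^ Suc k" using dex[OF that(1)] k by simp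
    then obtain u where u: "(v, u) \<in> ?A" "(u, r) \<in> ?A ^^ k"
      using relpow_Suc_D2 by metis
    have "d u \<le> k" using dmin u by auto
    moreover have "d v \<le> Suc (d u)"
      using dmin[OF relpow_Suc_I2[OF u(1) dex]] AV[OF u(1)] by auto
    ultimately show ?thesis using u k by auto
  qed
  define p where "p v = (if v \<in> V - {r} then (SOME u. (v, u) \<in> ?A \<and> Suc (d u) = d v) else undefined)" for v
  have pp: "(v, p v) \<in> ?A" "Suc (d (p v)) = d v" if "v \<in> V - {r}" for v
    using someI_ex[OF pex[of v]] that unfolding p_def by auto
  have pV: "p v \<in> V" if "v \<in> V - {r}" for v using AV[OF pp(1)[OF that]] by auto
  have pE: "{v, p v} \<in> E" if "v \<in> V - {r}" for v using pp(1)[OF that] unfolding adj_def by auto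
  have valid: "p \<in> Valid {r} (V - {r})"
    unfolding Valid_def
  proof (intro CollectI conjI exI[of _ d] ballI)
    show "p \<in> V - {r} \<rightarrow>\<^sub>E {r} \<union> (V - {r})"
    proof (rule PiE_I)
      fix v assume "v \<in> V - {r}" then show "p v \<in> {r} \<union> (V - {r})" using pV by auto
    next
      fix v assume "v \<notin> V - {r}" then show "p v = undefined" by (auto simp: p_def)
    qed
  next
    fix s assume "s \<in> V - {r}" then show "d (p s) < d s" using pp(2) by force
  qed
  have inj: "inj_on (\<lambda>v. {v, p v}) (V - {r})"
  proof (rule inj_onI)
    fix u v assume u: "u \<in> V - {r}" and v: "v \<in> V - {r}" and eq: "{u, p u} = {v, p v}"
    show "u = v"
    proof (rule ccontr)
      assume "u \<noteq> v"
      with eq have "u = p v" "v = p u" by (auto simp: doubleton_eq_iff)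
      then show False using pp(2)[OF u] pp(2)[OF v] by simp
    qed
  qed
  have surj: "E \<subseteq> (\<lambda>v. {v, p v}) ` (V - {r})"
  proof
    fix e assume e: "e \<in> E"
    then obtain i j where ij: "e = {i, j}" "i \<in> V" "j \<in> V" "i \<noteq> j" using Esub by blast
    have main: "e \<in> (\<lambda>v. {v, p v}) ` (V - {r})" if ij': "e = {i, j}" "i \<in> V" "j \<in> V" "i \<noteq> j" "d i \<le> d j" for i j
    proof (rule ccontr)
      assume nin: "e \<notin> (\<lambda>v. {v, p v}) ` (V - {r})"
      let ?B = "adj (E - {e})"
      have Bstep: "(v, p v) \<in> ?B" if "v \<in> V - {r}" "{v, p v} \<noteq> e" for v
        using pE[OF that(1)] that(2) unfolding adj_def by auto
      have low: "\<forall>v\<in>V. d v \<le> d i \<longrightarrow> (v, r) \<in> ?B\<^sup>*" 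
      proof -
        have "\<forall>v\<in>V. d v = m \<longrightarrow> d v \<le> d i \<longrightarrow> (v, r) \<in> ?B\<^sup>*" for m
        proof -
        show "\<forall>v\<in>V. d v = m \<longrightarrow> d v \<le> d i \<longrightarrow> (v, r) \<in> ?B\<^sup>*"
        proof (induction m rule: less_induct)
          case (less m)
          show ?case
          proof (intro ballI impI)
            fix v assume v: "v \<in> V" "d v = m" "d v \<le> d i"
            show "(v, r) \<in> ?B\<^sup>*"
            proof (cases "v = r")
              case False
              then have vv: "v \<in> V - {r}" using v by auto
              have "p v \<noteq> i" "p v \<noteq> j" using pp(2)[OF vv] v ij'(5) by auto
              then have "{v, p v} \<noteq> e" using ij'(1) by (auto simp: doubleton_eq_iff)
              then have st: "(v, p v) \<in> ?B" by (rule Bstep[OF vv])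
              have "(p v, r) \<in> ?B\<^sup>*"
                using less.IH[of "d (p v)"] pp(2)[OF vv] pV[OF vv] v by auto
              then show ?thesis using st by (meson converse_rtrancl_into_rtrancl)
            qed simp
          qed
        qed
        qed
        then show ?thesis by blast
      qed
      have ir: "(i, r) \<in> ?B\<^sup>*" using low ij' by auto
      have jr: "(j, r) \<in> ?B\<^sup>*"
      proof (cases "d j \<le> d i")
        case True then show ?thesis using low ij' by auto
      next
        case False
        have "(j, i) \<in> ?A" using e ij' unfolding adj_def by (auto simp: insert_commute)
        then have dj: "d j = Suc (d i)" using dnb[of j i] False by auto
        have jj: "j \<in> V - {r}" using dj d0[of r] r ij' by auto
        have "p j \<noteq> i" using nin jj ij' by (auto simp: insert_commute)
        moreover have "p j \<noteq> j" using pp(2)[OF jj] by auto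
        ultimately have "{j, p j} \<noteq> e" using ij' by (auto simp: doubleton_eq_iff)
        then have st: "(j, p j) \<in> ?B" by (rule Bstep[OF jj])
        have "(p j, r) \<in> ?B\<^sup>*" using low pp(2)[OF jj] pV[OF jj] dj by auto
        then show ?thesis using st by (meson converse_rtrancl_into_rtrancl)
      qed
      have "(i, j) \<in> ?B\<^sup>*" using ir adj_rtrancl_sym[OF jr] by (rule rtrancl_trans)
      then show False using bridge e ij' by blast
    qed
    show "e \<in> (\<lambda>v. {v, p v}) ` (V - {r})"
    proof (cases "d i \<le> d j")
      case True then show ?thesis using main ij by blast
    next
      case False then show ?thesis using main[of j i] ij by (auto simp: insert_commute)
    qed
  qed
  have "(\<lambda>v. {v, p v}) ` (V - {r}) \<subseteq> E" using pE by auto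
  with surj have "E = (\<lambda>v. {v, p v}) ` (V - {r})" by auto
  with valid inj show ?thesis by blast
qed

lemma trees_le_TT:
  fixes f :: "nat set \<Rightarrow> ennreal"
  assumes n: "n \<ge> 1"
  shows "(\<Sum>G\<in>trees n. \<Prod>e\<in>G. f e) \<le> TT {1} {2..n} (\<lambda>s t. f {s, t})"
proof -
  have V: "{1..n} - {1} = {2..n}" by auto
  have ex: "\<exists>p \<in> Valid {1} {2..n}. G = (\<lambda>v. {v, p v}) ` {2..n} \<and> inj_on (\<lambda>v. {v, p v}) {2..n}"
    if "G \<in> trees n" for G
    using tree_parent[of "{1..n}" G 1] that n V unfolding trees_def by auto
  define P where "P G = (SOME p. p \<in> Valid {1} {2..n} \<and> G = (\<lambda>v. {v, p v}) ` {2..n} \<and> inj_on (\<lambda>v. {v, p v}) {2..n})" for G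
  have PP: "P G \<in> Valid {1} {2..n}" "G = (\<lambda>v. {v, P G v}) ` {2..n}" "inj_on (\<lambda>v. {v, P G v}) {2..n}"
    if "G \<in> trees n" for G
    using someI_ex[OF ex[OF that, unfolded Bex_def]] unfolding P_def by auto
  let ?g = "\<lambda>p. \<Prod>s\<in>{2..n}. f {s, p s}"
  have "(\<Sum>G\<in>trees n. \<Prod>e\<in>G. f e) = (\<Sum>G\<in>trees n. ?g (P G))"
  proof (rule sum.cong[OF refl])
    fix G assume G: "G \<in> trees n"
    have "(\<Prod>e\<in>G. f e) = (\<Prod>e\<in>(\<lambda>v. {v, P G v}) ` {2..n}. f e)" using PP(2)[OF G] by simp
    also have "\<dots> = ?g (P G)" using prod.reindex[OF PP(3)[OF G], of f] by simp
    finally show "(\<Prod>e\<in>G. f e) = ?g (P G)" .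
  qed
  also have "\<dots> = (\<Sum>p\<in>P ` trees n. ?g p)"
  proof -
    have "inj_on P (trees n)"
    proof (rule inj_onI)
      fix G H assume "G \<in> trees n" "H \<in> trees n" "P G = P H"
      then show "G = H" using PP(2)[of G] PP(2)[of H] by metis
    qed
    then show ?thesis by (simp add: sum.reindex)
  qed
  also have "\<dots> \<le> (\<Sum>p\<in>Valid {1} {2..n}. ?g p)"
  proof (rule sum_mono2)
    show "finite (Valid {1} {2..n})" by (simp add: finite_Valid)
    show "P ` trees n \<subseteq> Valid {1} {2..n}" using PP(1) by (intro image_subsetI)
  qed simp
  also have "\<dots> = TT {1} {2..n} (\<lambda>s t. f {s, t})" unfolding TT_def by simp
  finally show ?thesis .
qed


lemma sum_swap_tri:
  fixes g :: "nat \<Rightarrow> nat \<Rightarrow> 'b::comm_monoid_add"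
  shows "(\<Sum>n\<in>{1..N}. \<Sum>k\<in>{1..n}. g k (n - k)) = (\<Sum>k\<in>{1..N}. \<Sum>m\<in>{..N - k}. g k m)"
proof (induction N)
  case 0 then show ?case by simp
next
  case (Suc N)
  have A: "(\<Sum>k\<in>{1..Suc N}. \<Sum>m\<in>{..Suc N - k}. g k m)
     = (\<Sum>k\<in>{1..N}. \<Sum>m\<in>{..Suc N - k}. g k m) + g (Suc N) 0"
    by simp
  have B: "(\<Sum>k\<in>{1..N}. \<Sum>m\<in>{..Suc N - k}. g k m) = (\<Sum>k\<in>{1..N}. (\<Sum>m\<in>{..N - k}. g k m) + g k (Suc N - k))"
  proof (rule sum.cong[OF refl])
    fix k assume "k \<in> {1..N}"
    then have "Suc N - k = Suc (N - k)" by auto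
    then show "(\<Sum>m\<in>{..Suc N - k}. g k m) = (\<Sum>m\<in>{..N - k}. g k m) + g k (Suc N - k)"
      by (simp add: add.commute)
  qed
  have C: "(\<Sum>k\<in>{1..Suc N}. g k (Suc N - k)) = (\<Sum>k\<in>{1..N}. g k (Suc N - k)) + g (Suc N) 0"
    by simp
  show ?case
    using Suc A B C by (simp add: sum.distrib add.assoc)
qed


lemma coef_ennreal:
  assumes "k \<le> (n::nat)"
  shows "ennreal (1 / fact n) * of_nat (n choose k) = ennreal (1 / fact k) * ennreal (1 / fact (n - k))"
proof -
  have "(1 / fact n) * real (n choose k) = (1 / fact k) * (1 / fact (n - k))"
    using binomial_fact[OF assms, where 'a=real] by (simp add: field_simps)
  then have "ennreal ((1 / fact n) * real (n choose k)) = ennreal ((1 / fact k) * (1 / fact (n - k)))" by simp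
  moreover have "ennreal ((1 / fact n) * real (n choose k)) = ennreal (1 / fact n) * of_nat (n choose k)"
    by (subst ennreal_mult) (auto simp: ennreal_of_nat_eq_real_of_nat)
  moreover have "ennreal ((1 / fact k) * (1 / fact (n - k))) = ennreal (1 / fact k) * ennreal (1 / fact (n - k))"
    by (subst ennreal_mult) auto
  ultimately show ?thesis by simp
qed

lemma exp_partial:
  assumes "0 \<le> (a::real)"
  shows "(\<Sum>k\<in>{..N}. a ^ k / fact k) \<le> exp a"
proof -
  have "(\<Sum>k\<in>{..N}. a ^ k / fact k) \<le> (\<Sum>k. a ^ k / fact k)"
    by (rule sum_le_suminf) (use summable_exp[of a] assms in \<open>auto simp: divide_inverse mult.commute\<close>)
  also have "\<dots> = exp a" by (simp add: exp_def divide_inverse mult.commute scaleR_conv_of_real)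
  finally show ?thesis .
qed


locale tsetup =
  fixes M :: "'a measure" and w :: "'a \<Rightarrow> 'a \<Rightarrow> ennreal" and c :: "'a \<Rightarrow> ennreal"
  assumes finM: "finite_measure M"
    and w_meas: "(\<lambda>p. w (fst p) (snd p)) \<in> borel_measurable (M \<Otimes>\<^sub>M M)"
    and c_meas: "c \<in> borel_measurable M"
begin

lemma sfM: "sigma_finite_measure M"
  using finM unfolding finite_measure_def by simp

sublocale P: product_sigma_finite "\<lambda>_::nat. M"
  unfolding product_sigma_finite_def using sfM by simp

lemma w_meas'[measurable]:
  assumes "f \<in> measurable N M" "g \<in> measurable N M"
  shows "(\<lambda>x. w (f x) (g x)) \<in> borel_measurable N"
proof -
  have "(\<lambda>x. (f x, g x)) \<in> measurable N (M \<Otimes>\<^sub>M M)" using assms by measurable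
  from measurable_comp[OF this w_meas] show ?thesis by (simp add: comp_def)
qed

lemma c_meas'[measurable]: "f \<in> measurable N M \<Longrightarrow> (\<lambda>x. c (f x)) \<in> borel_measurable N"
  using measurable_comp[OF _ c_meas] by (simp add: comp_def)

lemma reindex:
  fixes KK S :: "nat set"
  assumes KK: "finite KK" and bij: "bij_betw \<sigma> KK S"
    and f: "f \<in> borel_measurable (PiM KK (\<lambda>_. M))"
  shows "(\<integral>\<^sup>+ y. f (\<lambda>i\<in>KK. y (\<sigma> i)) \<partial>PiM S (\<lambda>_. M)) = (\<integral>\<^sup>+ u. f u \<partial>PiM KK (\<lambda>_. M))"
proof -
  let ?rho = "\<lambda>y. \<lambda>i\<in>KK. y (\<sigma> i)"
  have S: "finite S" using bij KK bij_betw_finite by blast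
  have sig: "\<sigma> i \<in> S" if "i \<in> KK" for i using bij that by (auto simp: bij_betw_def)
  have rho: "?rho \<in> measurable (PiM S (\<lambda>_. M)) (PiM KK (\<lambda>_. M))"
    by (rule measurable_restrict) (auto intro!: measurable_component_singleton sig)
  have D: "distr (PiM S (\<lambda>_. M)) (PiM KK (\<lambda>_. M)) ?rho = PiM KK (\<lambda>_. M)"
  proof (rule P.PiM_eqI[OF KK])
    show "sets (distr (PiM S (\<lambda>_. M)) (PiM KK (\<lambda>_. M)) ?rho) = sets (PiM KK (\<lambda>_. M))" by simp
  next
    fix A assume A: "\<And>i. i \<in> KK \<Longrightarrow> A i \<in> sets M"
    let ?inv = "the_inv_into KK \<sigma>"
    have inv1: "?inv (\<sigma> i) = i" if "i \<in> KK" for i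
      using bij that by (simp add: bij_betw_def the_inv_into_f_f)
    have inv2: "?inv s \<in> KK" "\<sigma> (?inv s) = s" if "s \<in> S" for s
      using bij that by (auto simp: bij_betw_def the_inv_into_into f_the_inv_into_f)
    have pre: "?rho -` Pi\<^sub>E KK A \<inter> space (PiM S (\<lambda>_. M)) = Pi\<^sub>E S (\<lambda>s. A (?inv s))"
    proof (intro set_eqI iffI)
      fix y assume y: "y \<in> ?rho -` Pi\<^sub>E KK A \<inter> space (PiM S (\<lambda>_. M))"
      show "y \<in> Pi\<^sub>E S (\<lambda>s. A (?inv s))"
      proof (rule PiE_I)
        fix s assume s: "s \<in> S"
        have "?rho y (?inv s) \<in> A (?inv s)" using y inv2[OF s] by (auto simp: PiE_iff)
        then show "y s \<in> A (?inv s)" using inv2[OF s] by simp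
      next
        fix s assume "s \<notin> S" then show "y s = undefined" using y by (auto simp: space_PiM PiE_def extensional_def)
      qed
    next
      fix y assume y: "y \<in> Pi\<^sub>E S (\<lambda>s. A (?inv s))"
      have "?rho y \<in> Pi\<^sub>E KK A"
        using y sig inv1 by (auto simp: PiE_iff) (metis)
      moreover have "y \<in> space (PiM S (\<lambda>_. M))"
        using y A inv2 sets.sets_into_space by (fastforce simp: space_PiM PiE_iff)
      ultimately show "y \<in> ?rho -` Pi\<^sub>E KK A \<inter> space (PiM S (\<lambda>_. M))" by simp
    qed
    have "emeasure (distr (PiM S (\<lambda>_. M)) (PiM KK (\<lambda>_. M)) ?rho) (Pi\<^sub>E KK A)
        = emeasure (PiM S (\<lambda>_. M)) (Pi\<^sub>E S (\<lambda>s. A (?inv s)))"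
      using A rho by (subst emeasure_distr) (auto simp: pre intro!: sets_PiM_I_finite KK)
    also have "\<dots> = (\<Prod>s\<in>S. emeasure M (A (?inv s)))"
      using A inv2 S by (subst P.emeasure_PiM) auto
    also have "\<dots> = (\<Prod>i\<in>KK. emeasure M (A i))"
      using prod.reindex_bij_betw[OF bij, of "\<lambda>s. emeasure M (A (?inv s))"] inv1 by simp
    finally show "emeasure (distr (PiM S (\<lambda>_. M)) (PiM KK (\<lambda>_. M)) ?rho) (Pi\<^sub>E KK A) = (\<Prod>i\<in>KK. emeasure M (A i))" .
  qed
  have "(\<integral>\<^sup>+ y. f (?rho y) \<partial>PiM S (\<lambda>_. M)) = (\<integral>\<^sup>+ u. f u \<partial>distr (PiM S (\<lambda>_. M)) (PiM KK (\<lambda>_. M)) ?rho)"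
    using f rho by (simp add: nn_integral_distr)
  also have "\<dots> = (\<integral>\<^sup>+ u. f u \<partial>PiM KK (\<lambda>_. M))" using D by simp
  finally show ?thesis .
qed

function J :: "nat \<Rightarrow> nat \<Rightarrow> (nat \<Rightarrow> 'a) \<Rightarrow> ennreal" where
  "J n k z = (if n = 0 then 1 else
     (\<Sum>k'\<in>{1..n}. of_nat (n choose k') *
        (\<integral>\<^sup>+ u. (\<Prod>i<k'. c (u i) * (\<Sum>j<k. w (u i) (z j))) * J (n - k') k' u \<partial>PiM {..<k'} (\<lambda>_. M))))"
  by pat_completeness auto
termination by (relation "Wellfounded.measure (\<lambda>(n, k, z). n)") auto

declare J.simps[simp del]

lemma J_0[simp]: "J 0 k z = 1" by (simp add: J.simps)

lemma J_cong: "(\<And>j. j < k \<Longrightarrow> z j = z' j) \<Longrightarrow> J n k z = J n k z'"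
  by (subst (1 2) J.simps) simp

lemma J_meas[measurable]: "J n k \<in> borel_measurable (PiM {..<k} (\<lambda>_. M))"
proof (induction n arbitrary: k rule: less_induct)
  case (less n)
  show ?case
  proof (cases "n = 0")
    case True then show ?thesis by (simp add: J.simps)
  next
    case False
    have IH[measurable]: "J (n - k') k' \<in> borel_measurable (PiM {..<k'} (\<lambda>_. M))" if "k' \<in> {1..n}" for k'
      using less that False by auto
    have m: "(\<lambda>z. \<integral>\<^sup>+ u. (\<Prod>i<k'. c (u i) * (\<Sum>j<k. w (u i) (z j))) * J (n - k') k' u \<partial>PiM {..<k'} (\<lambda>_. M))
       \<in> borel_measurable (PiM {..<k} (\<lambda>_. M))" if k': "k' \<in> {1..n}" for k'
    proof -
      interpret S2: sigma_finite_measure "PiM {..<k'} (\<lambda>_. M)"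
        by (rule P.sigma_finite) simp
      note [measurable] = IH[OF k']
      show ?thesis
        by (rule S2.borel_measurable_nn_integral) measurable
    qed
    show ?thesis
      apply (subst J.simps[abs_def])
      using False m by simp
  qed
qed

lemma L2:
  assumes A_meas[measurable]: "A \<in> borel_measurable M"
    and hA: "\<And>x. A x = \<infinity> \<or> (x \<in> space M \<and> (\<exists>\<alpha>\<ge>0. A x = ennreal (exp \<alpha>) \<and> (\<integral>\<^sup>+ v. c v * w v x * A v \<partial>M) \<le> ennreal \<alpha>))"
  shows "(\<Sum>n\<in>{..N}. ennreal (1 / fact n) * J n k z) \<le> (\<Prod>j<k. A (z j))"
proof (induction N arbitrary: k z rule: less_induct)
  case (less N)
  have A1: "1 \<le> A x" for x
  proof -
    from hA[of x] show ?thesis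
    proof
      assume "x \<in> space M \<and> (\<exists>\<alpha>\<ge>0. A x = ennreal (exp \<alpha>) \<and> (\<integral>\<^sup>+ v. c v * w v x * A v \<partial>M) \<le> ennreal \<alpha>)"
      then obtain \<alpha> where "\<alpha> \<ge> 0" "A x = ennreal (exp \<alpha>)" by blast
      then show ?thesis using ennreal_leI[of 1 "exp \<alpha>"] by simp
    qed simp
  qed
  show ?case
  proof (cases "\<exists>j<k. A (z j) = \<infinity>")
    case True
    then obtain j0 where j0: "j0 < k" "A (z j0) = \<infinity>" by auto
    have "(\<Prod>j<k. A (z j)) = top"
      unfolding ennreal_prod_eq_top using j0 A1
      by (auto intro!: bexI[of _ j0] simp: not_one_le_zero) (metis not_one_le_zero)
    then show ?thesis by simp
  next
    case False
    then have zsp: "z j \<in> space M" if "j < k" for j using hA[of "z j"] that by auto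
    from False have "\<forall>j\<in>{..<k}. \<exists>\<alpha>\<ge>0. A (z j) = ennreal (exp \<alpha>) \<and> (\<integral>\<^sup>+ v. c v * w v (z j) * A v \<partial>M) \<le> ennreal \<alpha>"
      using hA by auto
    then obtain al where al: "\<And>j. j \<in> {..<k} \<Longrightarrow> al j \<ge> 0 \<and> A (z j) = ennreal (exp (al j)) \<and> (\<integral>\<^sup>+ v. c v * w v (z j) * A v \<partial>M) \<le> ennreal (al j)"
      by metis
    define alpha where "alpha = (\<Sum>j<k. al j)"
    have alpha0: "0 \<le> alpha" unfolding alpha_def using al by (auto intro: sum_nonneg)
    define beta where "beta = (\<integral>\<^sup>+ v. c v * (\<Sum>j<k. w v (z j)) * A v \<partial>M)"
    have beta: "beta \<le> ennreal alpha"
    proof -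
      have "beta = (\<integral>\<^sup>+ v. (\<Sum>j<k. c v * w v (z j) * A v) \<partial>M)"
        unfolding beta_def by (simp add: sum_distrib_left sum_distrib_right)
      also have "\<dots> = (\<Sum>j<k. \<integral>\<^sup>+ v. c v * w v (z j) * A v \<partial>M)"
      proof (rule nn_integral_sum)
        fix j assume "j \<in> {..<k}"
        then have [measurable]: "z j \<in> space M" using zsp by auto
        show "(\<lambda>v. c v * w v (z j) * A v) \<in> borel_measurable M" by measurable
      qed
      also have "\<dots> \<le> (\<Sum>j<k. ennreal (al j))"
        by (rule sum_mono) (use al in auto)
      also have "\<dots> = ennreal alpha" unfolding alpha_def using al by (subst sum_ennreal) auto
      finally show ?thesis .
    qed
    define G where "G (k'::nat) u = (\<Prod>i<k'. c (u i) * (\<Sum>j<k. w (u i) (z j)))" for k' u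
    have G_meas[measurable]: "G k' \<in> borel_measurable (PiM {..<k'} (\<lambda>_. M))" for k'
      unfolding G_def by measurable (auto intro: zsp)
    have Hm[measurable]: "(\<lambda>v. c v * (\<Sum>j<k. w v (z j)) * A v) \<in> borel_measurable M"
      by measurable (auto intro: zsp)
    define Q where "Q (k'::nat) (m::nat) = (\<integral>\<^sup>+ u. G k' u * J m k' u \<partial>PiM {..<k'} (\<lambda>_. M))" for k' m
    have Jn: "ennreal (1 / fact n) * J n k z = (\<Sum>k'\<in>{1..n}. ennreal (1 / fact k') * (ennreal (1 / fact (n - k')) * Q k' (n - k')))"
      if "n \<in> {1..N}" for n
    proof -
      have "ennreal (1 / fact n) * J n k z = (\<Sum>k'\<in>{1..n}. (ennreal (1 / fact n) * of_nat (n choose k')) * Q k' (n - k'))"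
        using that by (subst J.simps) (simp add: sum_distrib_left mult.assoc G_def Q_def)
      also have "\<dots> = (\<Sum>k'\<in>{1..n}. ennreal (1 / fact k') * (ennreal (1 / fact (n - k')) * Q k' (n - k')))"
        by (rule sum.cong[OF refl]) (simp add: coef_ennreal mult.assoc)
      finally show ?thesis .
    qed
    have step: "(\<Sum>m\<in>{..N - k'}. ennreal (1 / fact m) * Q k' m) \<le> beta ^ k'" if k': "k' \<in> {1..N}" for k'
    proof -
      have "(\<Sum>m\<in>{..N - k'}. ennreal (1 / fact m) * Q k' m)
          = (\<Sum>m\<in>{..N - k'}. \<integral>\<^sup>+ u. G k' u * (ennreal (1 / fact m) * J m k' u) \<partial>PiM {..<k'} (\<lambda>_. M))"
        unfolding Q_def by (rule sum.cong[OF refl], subst nn_integral_cmult[symmetric]) (measurable, simp add: ac_simps)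
      also have "\<dots> = (\<integral>\<^sup>+ u. (\<Sum>m\<in>{..N - k'}. G k' u * (ennreal (1 / fact m) * J m k' u)) \<partial>PiM {..<k'} (\<lambda>_. M))"
        by (rule nn_integral_sum[symmetric]) measurable
      also have "\<dots> = (\<integral>\<^sup>+ u. G k' u * (\<Sum>m\<in>{..N - k'}. ennreal (1 / fact m) * J m k' u) \<partial>PiM {..<k'} (\<lambda>_. M))"
        by (simp add: sum_distrib_left)
      also have "\<dots> \<le> (\<integral>\<^sup>+ u. G k' u * (\<Prod>i<k'. A (u i)) \<partial>PiM {..<k'} (\<lambda>_. M))"
      proof (rule nn_integral_mono)
        fix u
        have "N - k' < N" using k' by auto
        then have "(\<Sum>m\<in>{..N - k'}. ennreal (1 / fact m) * J m k' u) \<le> (\<Prod>i<k'. A (u i))"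
          by (rule less.IH)
        then show "G k' u * (\<Sum>m\<in>{..N - k'}. ennreal (1 / fact m) * J m k' u) \<le> G k' u * (\<Prod>i<k'. A (u i))"
          by (rule mult_left_mono) simp
      qed
      also have "\<dots> = (\<integral>\<^sup>+ u. (\<Prod>i<k'. c (u i) * (\<Sum>j<k. w (u i) (z j)) * A (u i)) \<partial>PiM {..<k'} (\<lambda>_. M))"
        unfolding G_def by (simp add: prod.distrib)
      also have "\<dots> = (\<Prod>i<k'. \<integral>\<^sup>+ v. c v * (\<Sum>j<k. w v (z j)) * A v \<partial>M)"
        by (rule P.product_nn_integral_prod) (auto intro: Hm)
      also have "\<dots> = beta ^ k'" unfolding beta_def by simp
      finally show ?thesis .
    qed
    have "(\<Sum>n\<in>{..N}. ennreal (1 / fact n) * J n k z) = 1 + (\<Sum>n\<in>{1..N}. ennreal (1 / fact n) * J n k z)"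
    proof -
      have "{..N} = insert 0 {1..N}" by auto
      then show ?thesis by simp
    qed
    also have "\<dots> = 1 + (\<Sum>n\<in>{1..N}. \<Sum>k'\<in>{1..n}. ennreal (1 / fact k') * (ennreal (1 / fact (n - k')) * Q k' (n - k')))"
      using Jn by simp
    also have "\<dots> = 1 + (\<Sum>k'\<in>{1..N}. \<Sum>m\<in>{..N - k'}. ennreal (1 / fact k') * (ennreal (1 / fact m) * Q k' m))"
      by (subst sum_swap_tri) simp
    also have "\<dots> = 1 + (\<Sum>k'\<in>{1..N}. ennreal (1 / fact k') * (\<Sum>m\<in>{..N - k'}. ennreal (1 / fact m) * Q k' m))"
      by (simp add: sum_distrib_left)
    also have "\<dots> \<le> 1 + (\<Sum>k'\<in>{1..N}. ennreal (1 / fact k') * beta ^ k')"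
      by (intro add_left_mono sum_mono mult_left_mono step) auto
    also have "\<dots> = (\<Sum>k'\<in>{..N}. ennreal (1 / fact k') * beta ^ k')"
    proof -
      have "{..N} = insert 0 {1..N}" by auto
      then show ?thesis by simp
    qed
    also have "\<dots> \<le> (\<Sum>k'\<in>{..N}. ennreal (alpha ^ k' / fact k'))"
    proof (rule sum_mono)
      fix k' :: nat
      have "beta ^ k' \<le> ennreal alpha ^ k'" using beta by (rule power_mono) simp
      also have "\<dots> = ennreal (alpha ^ k')" using alpha0 by (rule ennreal_power)
      finally have "ennreal (1 / fact k') * beta ^ k' \<le> ennreal (1 / fact k') * ennreal (alpha ^ k')"
        by (rule mult_left_mono) simp
      also have "\<dots> = ennreal (alpha ^ k' / fact k')"
        using alpha0 by (subst ennreal_mult[symmetric]) auto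
      finally show "ennreal (1 / fact k') * beta ^ k' \<le> ennreal (alpha ^ k' / fact k')" .
    qed
    also have "\<dots> = ennreal (\<Sum>k'\<in>{..N}. alpha ^ k' / fact k')"
      using alpha0 by (subst sum_ennreal) auto
    also have "\<dots> \<le> ennreal (exp alpha)"
      using exp_partial[OF alpha0] by (rule ennreal_leI)
    also have "\<dots> = (\<Prod>j<k. A (z j))"
    proof -
      have "exp alpha = (\<Prod>j<k. exp (al j))" unfolding alpha_def by (simp add: exp_sum)
      then have "ennreal (exp alpha) = (\<Prod>j<k. ennreal (exp (al j)))" by (simp add: prod_ennreal)
      also have "\<dots> = (\<Prod>j<k. A (z j))" using al by (intro prod.cong) auto
      finally show ?thesis .
    qed
    finally show ?thesis .
  qed
qed

definition upd :: "(nat \<Rightarrow> 'a) \<Rightarrow> nat set \<Rightarrow> (nat \<Rightarrow> 'a) \<Rightarrow> nat \<Rightarrow> 'a" where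
  "upd x S y = (\<lambda>i. if i \<in> S then y i else x i)"

definition II :: "nat set \<Rightarrow> nat set \<Rightarrow> (nat \<Rightarrow> 'a) \<Rightarrow> ennreal" where
  "II R S x = (\<integral>\<^sup>+ y. (\<Prod>s\<in>S. c (y s)) * TT R S (\<lambda>s t. w (upd x S y s) (upd x S y t)) \<partial>PiM S (\<lambda>_. M))"

lemma TT_meas:
  assumes f: "\<And>i. i \<in> R \<union> S \<Longrightarrow> (\<lambda>y. f y i) \<in> measurable N M"
  shows "(\<lambda>y. TT R S (\<lambda>s t. w (f y s) (f y t))) \<in> borel_measurable N"
  unfolding TT_def
proof (intro borel_measurable_sum borel_measurable_prod_ennreal)
  fix p s assume p: "p \<in> Valid R S" and s: "s \<in> S"
  then have "p s \<in> R \<union> S" unfolding Valid_def by auto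
  then show "(\<lambda>y. w (f y s) (f y (p s))) \<in> borel_measurable N"
    using f s by (intro w_meas') auto
qed

lemma upd_meas:
  assumes x: "\<And>i. i \<in> R \<Longrightarrow> x i \<in> space M" and i: "i \<in> R \<union> S"
  shows "(\<lambda>y. upd x S y i) \<in> measurable (PiM S (\<lambda>_. M)) M"
proof (cases "i \<in> S")
  case True
  then show ?thesis by (simp add: upd_def)
next
  case False
  then show ?thesis using x i by (simp add: upd_def)
qed

lemma TT_cong:
  assumes "\<And>s t. s \<in> S \<Longrightarrow> t \<in> R \<union> S \<Longrightarrow> W s t = W' s t"
  shows "TT R S W = TT R S W'"
  unfolding TT_def
proof (intro sum.cong[OF refl] prod.cong[OF refl])
  fix p s assume "p \<in> Valid R S" "s \<in> S"
  then show "W s (p s) = W' s (p s)" using assms unfolding Valid_def by auto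
qed

lemma L1:
  "finite S \<Longrightarrow> finite R \<Longrightarrow> R \<inter> S = {} \<Longrightarrow> bij_betw \<sigma> {..<card R} R \<Longrightarrow> (\<forall>r\<in>R. x r \<in> space M)
   \<Longrightarrow> II R S x \<le> J (card S) (card R) (\<lambda>j. x (\<sigma> j))"
proof (induction "card S" arbitrary: S R x \<sigma> rule: less_induct)
  case (less S R x \<sigma>)
  note finS = less.prems(1) and finR = less.prems(2) and disj = less.prems(3)
    and bij = less.prems(4) and xsp = less.prems(5)
  let ?N = "PiM S (\<lambda>_. M)"
  let ?n = "card S"
  define W where "W y = (\<lambda>s t. w (upd x S y s) (upd x S y t))" for y
  have updm: "(\<lambda>y. upd x S y i) \<in> measurable ?N M" if "i \<in> R \<union> S" for i
    using upd_meas[of R x i S] xsp that by auto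
  show ?case
  proof (cases "S = {}")
    case True
    have "II R S x = 1"
      unfolding II_def True by (simp add: TT_empty_S PiM_empty nn_integral_count_space_finite)
    then show ?thesis using True by simp
  next
    case False
    define F where "F S1 y = (\<Prod>s\<in>S. c (y s)) * ((\<Prod>s\<in>S1. \<Sum>r\<in>R. W y s r) * TT S1 (S - S1) (W y))" for S1 y
    have Fm: "F S1 \<in> borel_measurable ?N" if "S1 \<subseteq> S" for S1
    proof -
      have m1: "(\<lambda>y. TT S1 (S - S1) (W y)) \<in> borel_measurable ?N"
        unfolding W_def by (rule TT_meas) (use that updm in auto)
      have m2: "(\<lambda>y. \<Prod>s\<in>S1. \<Sum>r\<in>R. W y s r) \<in> borel_measurable ?N"
        unfolding W_def using that
        by (intro borel_measurable_prod_ennreal borel_measurable_sum w_meas' updm) auto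
      have m3: "(\<lambda>y. \<Prod>s\<in>S. c (y s)) \<in> borel_measurable ?N"
        by (intro borel_measurable_prod_ennreal c_meas') auto
      show ?thesis unfolding F_def using m1 m2 m3 by measurable
    qed
    define Q where "Q k = (\<integral>\<^sup>+ u. (\<Prod>i<k. c (u i) * (\<Sum>j<card R. w (u i) (x (\<sigma> j)))) * J (?n - k) k u \<partial>PiM {..<k} (\<lambda>_. M))" for k
    have "II R S x \<le> (\<integral>\<^sup>+ y. (\<Sum>S1\<in>Pow S. F S1 y) \<partial>?N)"
      unfolding II_def
    proof (rule nn_integral_mono)
      fix y
      have "TT R S (W y) \<le> (\<Sum>S1\<in>Pow S. (\<Prod>s\<in>S1. \<Sum>r\<in>R. W y s r) * TT S1 (S - S1) (W y))"
        by (rule TT_decomp[OF finR finS disj])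
      then show "(\<Prod>s\<in>S. c (y s)) * TT R S (\<lambda>s t. w (upd x S y s) (upd x S y t)) \<le> (\<Sum>S1\<in>Pow S. F S1 y)"
        unfolding F_def sum_distrib_left[symmetric] W_def by (rule mult_left_mono) simp
    qed
    also have "\<dots> = (\<Sum>S1\<in>Pow S. \<integral>\<^sup>+ y. F S1 y \<partial>?N)"
      by (rule nn_integral_sum) (use Fm in auto)
    also have "\<dots> \<le> (\<Sum>S1\<in>Pow S. if S1 = {} then 0 else Q (card S1))"
    proof (rule sum_mono)
      fix S1 assume S1: "S1 \<in> Pow S"
      show "(\<integral>\<^sup>+ y. F S1 y \<partial>?N) \<le> (if S1 = {} then 0 else Q (card S1))"
      proof (cases "S1 = {}")
        case True
        then have "F S1 y = 0" for y unfolding F_def using TT_empty_R[OF finS False] by simp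
        then show ?thesis using True by simp
      next
        case S1ne: False
        define S' where "S' = S - S1"
        define k where "k = card S1"
        have S1S: "S1 \<subseteq> S" using S1 by auto
        have finS1: "finite S1" using finS S1S finite_subset by auto
        have finS': "finite S'" using finS unfolding S'_def by auto
        have disj1: "S1 \<inter> S' = {}" unfolding S'_def by auto
        have US: "S1 \<union> S' = S" using S1S unfolding S'_def by auto
        have cardS': "card S' = ?n - k" unfolding S'_def k_def using S1S finS1 by (simp add: card_Diff_subset)
        have cardlt: "card S' < card S"
        proof -
          have "S - S1 \<subset> S" using S1S S1ne by blast
          then show ?thesis unfolding S'_def using finS by (simp add: psubset_card_mono)
        qed
        obtain \<sigma>1 where bij1: "bij_betw \<sigma>1 {..<k} S1"
          using ex_bij_betw_nat_finite[OF finS1] unfolding k_def atLeast0LessThan by blast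
        have s1m: "\<sigma>1 i \<in> S1" if "i < k" for i using bij1 that by (auto simp: bij_betw_def)
        define H1 where "H1 y1 = (\<Prod>s\<in>S1. c (y1 s) * (\<Sum>r\<in>R. w (y1 s) (x r)))" for y1
        define G2 where "G2 x' y2 = (\<Prod>s\<in>S'. c (y2 s)) * TT S1 S' (\<lambda>s t. w (upd x' S' y2 s) (upd x' S' y2 t))" for x' y2
        have FS: "F S1 (merge S1 S' (y1, y2)) = H1 y1 * G2 (upd x S1 y1) y2" for y1 y2
        proof -
          let ?y = "merge S1 S' (y1, y2)"
          have c1: "(\<Prod>s\<in>S. c (?y s)) = (\<Prod>s\<in>S1. c (y1 s)) * (\<Prod>s\<in>S'. c (y2 s))"
          proof -
            have "(\<Prod>s\<in>S. c (?y s)) = (\<Prod>s\<in>S1. c (?y s)) * (\<Prod>s\<in>S'. c (?y s))"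
              unfolding US[symmetric] using finS1 finS' disj1 by (rule prod.union_disjoint)
            also have "\<dots> = (\<Prod>s\<in>S1. c (y1 s)) * (\<Prod>s\<in>S'. c (y2 s))"
              using disj1 by (auto simp: merge_def intro!: prod.cong arg_cong2[where f="(*)"])
            finally show ?thesis .
          qed
          have u1: "upd x S ?y s = y1 s" if "s \<in> S1" for s
            using that S1S by (auto simp: upd_def merge_def)
          have uR: "upd x S ?y r = x r" if "r \<in> R" for r
            using that disj by (auto simp: upd_def)
          have c2: "(\<Prod>s\<in>S1. \<Sum>r\<in>R. W ?y s r) = (\<Prod>s\<in>S1. \<Sum>r\<in>R. w (y1 s) (x r))"
            unfolding W_def using u1 uR by simp
          have c3: "TT S1 (S - S1) (W ?y) = TT S1 S' (\<lambda>s t. w (upd (upd x S1 y1) S' y2 s) (upd (upd x S1 y1) S' y2 t))"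
            unfolding S'_def[symmetric]
          proof (rule TT_cong)
            fix s t assume "s \<in> S'" "t \<in> S1 \<union> S'"
            moreover have "upd x S ?y i = upd (upd x S1 y1) S' y2 i" if "i \<in> S1 \<union> S'" for i
              using that disj1 US by (auto simp: upd_def merge_def)
            ultimately show "W ?y s t = w (upd (upd x S1 y1) S' y2 s) (upd (upd x S1 y1) S' y2 t)"
              unfolding W_def by auto
          qed
          show ?thesis
            unfolding F_def H1_def G2_def c1 c2 c3 by (simp add: prod.distrib ac_simps)
        qed
        have xs: "x (\<sigma> j) \<in> space M" if "j < card R" for j
          using bij that xsp by (auto simp: bij_betw_def)
        define f where "f u = (\<Prod>i<k. c (u i) * (\<Sum>j<card R. w (u i) (x (\<sigma> j)))) * J (?n - k) k u" for u
        have fm: "f \<in> borel_measurable (PiM {..<k} (\<lambda>_. M))"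
          unfolding f_def by measurable (auto intro: xs)
        have "(\<integral>\<^sup>+ y. F S1 y \<partial>?N) = (\<integral>\<^sup>+ y1. (\<integral>\<^sup>+ y2. F S1 (merge S1 S' (y1, y2)) \<partial>PiM S' (\<lambda>_. M)) \<partial>PiM S1 (\<lambda>_. M))"
        proof -
          have "F S1 \<in> borel_measurable (PiM (S1 \<union> S') (\<lambda>_. M))" using Fm[OF S1S] US by simp
          from P.product_nn_integral_fold[OF disj1 finS1 finS' this] show ?thesis using US by simp
        qed
        also have "\<dots> = (\<integral>\<^sup>+ y1. H1 y1 * II S1 S' (upd x S1 y1) \<partial>PiM S1 (\<lambda>_. M))"
        proof (rule nn_integral_cong)
          fix y1 assume y1: "y1 \<in> space (PiM S1 (\<lambda>_. M))"
          have x'sp: "\<forall>r\<in>S1. upd x S1 y1 r \<in> space M" using y1 by (auto simp: upd_def space_PiM)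
          have G2m: "G2 (upd x S1 y1) \<in> borel_measurable (PiM S' (\<lambda>_. M))"
          proof -
            have m1: "(\<lambda>y2. TT S1 S' (\<lambda>s t. w (upd (upd x S1 y1) S' y2 s) (upd (upd x S1 y1) S' y2 t))) \<in> borel_measurable (PiM S' (\<lambda>_. M))"
              by (rule TT_meas) (use upd_meas[of S1 "upd x S1 y1"] x'sp in auto)
            have m3: "(\<lambda>y. \<Prod>s\<in>S'. c (y s)) \<in> borel_measurable (PiM S' (\<lambda>_. M))"
              by (intro borel_measurable_prod_ennreal c_meas') auto
            show ?thesis unfolding G2_def[abs_def] using m1 m3 by measurable
          qed
          show "(\<integral>\<^sup>+ y2. F S1 (merge S1 S' (y1, y2)) \<partial>PiM S' (\<lambda>_. M)) = H1 y1 * II S1 S' (upd x S1 y1)"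
            unfolding FS II_def using nn_integral_cmult[OF G2m, of "H1 y1"] by (simp add: G2_def[abs_def])
        qed
        also have "\<dots> \<le> (\<integral>\<^sup>+ y1. H1 y1 * J (card S') k (\<lambda>j. upd x S1 y1 (\<sigma>1 j)) \<partial>PiM S1 (\<lambda>_. M))"
        proof (rule nn_integral_mono)
          fix y1 assume y1: "y1 \<in> space (PiM S1 (\<lambda>_. M))"
          have x'sp: "\<forall>r\<in>S1. upd x S1 y1 r \<in> space M" using y1 by (auto simp: upd_def space_PiM)
          have "II S1 S' (upd x S1 y1) \<le> J (card S') (card S1) (\<lambda>j. upd x S1 y1 (\<sigma>1 j))"
            using less.hyps[OF cardlt finS' finS1 disj1 bij1[unfolded k_def] x'sp] .
          then show "H1 y1 * II S1 S' (upd x S1 y1) \<le> H1 y1 * J (card S') k (\<lambda>j. upd x S1 y1 (\<sigma>1 j))"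
            unfolding k_def by (rule mult_left_mono) simp
        qed
        also have "\<dots> = (\<integral>\<^sup>+ y1. f (\<lambda>i\<in>{..<k}. y1 (\<sigma>1 i)) \<partial>PiM S1 (\<lambda>_. M))"
        proof (rule nn_integral_cong)
          fix y1 assume y1: "y1 \<in> space (PiM S1 (\<lambda>_. M))"
          have h: "H1 y1 = (\<Prod>i<k. c (y1 (\<sigma>1 i)) * (\<Sum>j<card R. w (y1 (\<sigma>1 i)) (x (\<sigma> j))))"
          proof -
            have "H1 y1 = (\<Prod>i<k. c (y1 (\<sigma>1 i)) * (\<Sum>r\<in>R. w (y1 (\<sigma>1 i)) (x r)))"
              unfolding H1_def by (rule prod.reindex_bij_betw[OF bij1, symmetric])
            also have "\<dots> = (\<Prod>i<k. c (y1 (\<sigma>1 i)) * (\<Sum>j<card R. w (y1 (\<sigma>1 i)) (x (\<sigma> j))))"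
              by (intro prod.cong refl arg_cong2[where f="(*)"] sum.reindex_bij_betw[OF bij, symmetric])
            finally show ?thesis .
          qed
          have j: "J (card S') k (\<lambda>j. upd x S1 y1 (\<sigma>1 j)) = J (?n - k) k (\<lambda>i\<in>{..<k}. y1 (\<sigma>1 i))"
            unfolding cardS' by (rule J_cong) (auto simp: upd_def s1m)
          show "H1 y1 * J (card S') k (\<lambda>j. upd x S1 y1 (\<sigma>1 j)) = f (\<lambda>i\<in>{..<k}. y1 (\<sigma>1 i))"
            unfolding h j f_def by simp
        qed
        also have "\<dots> = (\<integral>\<^sup>+ u. f u \<partial>PiM {..<k} (\<lambda>_. M))"
          by (rule reindex[OF _ bij1 fm]) simp
        also have "\<dots> = Q k" unfolding f_def Q_def ..
        finally show ?thesis using S1ne k_def by simp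
      qed
    qed
    also have "\<dots> = J ?n (card R) (\<lambda>j. x (\<sigma> j))"
    proof -
      let ?h = "\<lambda>S1. if S1 = {} then 0 else Q (card S1)"
      have "(\<Sum>S1\<in>Pow S. ?h S1) = (\<Sum>k\<in>{..?n}. \<Sum>S1\<in>{S1. S1 \<in> Pow S \<and> card S1 = k}. ?h S1)"
      proof (rule sum.group[symmetric])
        show "finite (Pow S)" using finS by simp
        show "finite {..?n}" by simp
        show "card ` Pow S \<subseteq> {..?n}" using card_mono[OF finS] by auto
      qed
      also have "\<dots> = (\<Sum>k\<in>{..?n}. of_nat (?n choose k) * (if k = 0 then 0 else Q k))"
      proof (rule sum.cong[OF refl])
        fix k assume "k \<in> {..?n}"
        have e: "{S1. S1 \<in> Pow S \<and> card S1 = k} = {B. B \<subseteq> S \<and> card B = k}" by auto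
        have "(\<Sum>S1\<in>{S1. S1 \<in> Pow S \<and> card S1 = k}. ?h S1) = (\<Sum>S1\<in>{S1. S1 \<in> Pow S \<and> card S1 = k}. (if k = 0 then 0 else Q k))"
        proof (rule sum.cong[OF refl])
          fix S1 assume "S1 \<in> {S1. S1 \<in> Pow S \<and> card S1 = k}"
          then have "S1 \<subseteq> S" "card S1 = k" by auto
          moreover then have "finite S1" using finS finite_subset by auto
          ultimately show "?h S1 = (if k = 0 then 0 else Q k)" by auto
        qed
        also have "\<dots> = of_nat (?n choose k) * (if k = 0 then 0 else Q k)"
          using n_subsets[OF finS, of k] e by simp
        finally show "(\<Sum>S1\<in>{S1. S1 \<in> Pow S \<and> card S1 = k}. ?h S1) = of_nat (?n choose k) * (if k = 0 then 0 else Q k)" .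
      qed
      also have "\<dots> = (\<Sum>k\<in>{1..?n}. of_nat (?n choose k) * Q k)"
      proof -
        have "{..?n} = insert 0 {1..?n}" by auto
        then have "(\<Sum>k\<in>{..?n}. of_nat (?n choose k) * (if k = 0 then 0 else Q k))
           = (\<Sum>k\<in>{1..?n}. of_nat (?n choose k) * (if k = 0 then 0 else Q k))" by simp
        also have "\<dots> = (\<Sum>k\<in>{1..?n}. of_nat (?n choose k) * Q k)"
          by (rule sum.cong[OF refl]) auto
        finally show ?thesis .
      qed
      also have "\<dots> = J ?n (card R) (\<lambda>j. x (\<sigma> j))"
        using False finS by (subst J.simps) (simp add: Q_def)
      finally show ?thesis .
    qed
    finally show ?thesis .
  qed
qed

end


lemma sum_shift1:
  fixes N :: nat and g :: "nat \<Rightarrow> 'b::comm_monoid_add"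
  assumes that: "N \<ge> 1"
  shows "(\<Sum>n\<in>{1..N}. g (n - 1)) = (\<Sum>m\<in>{..N - 1}. g m)"
proof -
  have "{1..N} = Suc ` {..N - 1}"
  proof (intro set_eqI iffI)
    fix x assume "x \<in> {1..N}"
    then have "x = Suc (x - 1)" "x - 1 \<in> {..N - 1}" by auto
    then show "x \<in> Suc ` {..N - 1}" by (metis image_eqI)
  next
    fix x assume "x \<in> Suc ` {..N - 1}" then show "x \<in> {1..N}" using that by auto
  qed
  then show ?thesis by (simp add: sum.reindex)
qed

theorem mainTheorem9:
  fixes M :: "'a measure" and \<zeta> :: "'a \<Rightarrow> 'a \<Rightarrow> complex" and a b :: "'a \<Rightarrow> real" and N :: nat
  assumes tv: "finite_measure M"
    and \<zeta>_meas: "(\<lambda>(x, y). \<zeta> x y) \<in> borel_measurable (M \<Otimes>\<^sub>M M)"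
    and \<zeta>_sym: "\<And>x y. \<zeta> x y = \<zeta> y x"
    and b_meas: "b \<in> borel_measurable M" and b_nonneg: "\<And>x. b x \<ge> 0"
    and a_meas: "a \<in> borel_measurable M" and a_nonneg: "\<And>x. a x \<ge> 0"
    and assumption2: "AE x in M. (\<integral>\<^sup>+ y. ennreal (cmod (\<zeta> x y) * exp (a y + 2 * b y)) \<partial>M) \<le> ennreal (a x)"
    and N: "N \<ge> 1"
  shows "AE x in M. K M \<zeta> b N x \<le> ennreal (exp (a x + 2 * b x))"
proof -
  define w where "w u v = ennreal (cmod (\<zeta> u v))" for u v
  define c where "c u = ennreal (exp (2 * b u))" for u
  have wm: "(\<lambda>p. w (fst p) (snd p)) \<in> borel_measurable (M \<Otimes>\<^sub>M M)"
  proof -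
    have "(\<lambda>p. \<zeta> (fst p) (snd p)) \<in> borel_measurable (M \<Otimes>\<^sub>M M)"
      using \<zeta>_meas by (simp add: case_prod_beta')
    then show ?thesis unfolding w_def by measurable
  qed
  have cm: "c \<in> borel_measurable M" unfolding c_def using b_meas by measurable
  interpret T: tsetup M w c
    using tv wm cm by (simp add: tsetup_def)
  from assumption2 obtain N0 where N0: "\<And>x. x \<in> space M - N0 \<Longrightarrow>
      (\<integral>\<^sup>+ y. ennreal (cmod (\<zeta> x y) * exp (a y + 2 * b y)) \<partial>M) \<le> ennreal (a x)" "N0 \<in> null_sets M"
    by (rule AE_E3) blast
  define Good where "Good = space M - N0"
  have Good_sets: "Good \<in> sets M" unfolding Good_def using N0(2) by auto
  have AEG: "AE x in M. x \<in> Good"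
    using AE_not_in[OF N0(2)] AE_space by eventually_elim (auto simp: Good_def)
  define A where "A x = (if x \<in> Good then ennreal (exp (a x)) else \<infinity>)" for x
  have Am: "A \<in> borel_measurable M"
    unfolding A_def using Good_sets a_meas by measurable
  have hA: "A x = \<infinity> \<or> (x \<in> space M \<and> (\<exists>\<alpha>\<ge>0. A x = ennreal (exp \<alpha>) \<and> (\<integral>\<^sup>+ v. c v * w v x * A v \<partial>M) \<le> ennreal \<alpha>))" for x
  proof (cases "x \<in> Good")
    case True
    have "(\<integral>\<^sup>+ v. c v * w v x * A v \<partial>M) = (\<integral>\<^sup>+ v. ennreal (cmod (\<zeta> x v) * exp (a v + 2 * b v)) \<partial>M)"
    proof (rule nn_integral_cong_AE)
      show "AE v in M. c v * w v x * A v = ennreal (cmod (\<zeta> x v) * exp (a v + 2 * b v))"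
        using AEG
      proof (rule eventually_mono)
        fix v assume "v \<in> Good"
        then have "c v * w v x * A v = ennreal (exp (2 * b v)) * ennreal (cmod (\<zeta> x v)) * ennreal (exp (a v))"
          unfolding c_def w_def A_def by (simp add: \<zeta>_sym[of v x])
        also have "\<dots> = ennreal (cmod (\<zeta> x v) * exp (a v + 2 * b v))"
          by (simp add: ennreal_mult[symmetric] exp_add mult_ac)
        finally show "c v * w v x * A v = ennreal (cmod (\<zeta> x v) * exp (a v + 2 * b v))" .
      qed
    qed
    also have "\<dots> \<le> ennreal (a x)" using N0(1) True unfolding Good_def by auto
    finally show ?thesis using True a_nonneg[of x] unfolding A_def Good_def by auto
  next
    case False then show ?thesis unfolding A_def by simp
  qed
  show ?thesis
    using AEG
  proof (rule eventually_mono)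
    fix x1 assume x1: "x1 \<in> Good"
    then have x1sp: "x1 \<in> space M" unfolding Good_def by auto
    have hterm: "(\<integral>\<^sup>+ y. ennreal
            ((\<Prod>i = 1..n. exp (2 * b ((y(1 := x1)) i))) *
             (\<Sum>G\<in>trees n. \<Prod>e\<in>G. cmod (\<zeta> ((y(1 := x1)) (Min e)) ((y(1 := x1)) (Max e)))))
         \<partial>(PiM {2..n} (\<lambda>_. M))) \<le> c x1 * T.J (n - 1) 1 (\<lambda>_. x1)" if n: "n \<ge> 1" for n
    proof -
      let ?S = "{2..n}"
      have "(\<integral>\<^sup>+ y. ennreal
            ((\<Prod>i = 1..n. exp (2 * b ((y(1 := x1)) i))) *
             (\<Sum>G\<in>trees n. \<Prod>e\<in>G. cmod (\<zeta> ((y(1 := x1)) (Min e)) ((y(1 := x1)) (Max e)))))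
         \<partial>(PiM ?S (\<lambda>_. M)))
        \<le> (\<integral>\<^sup>+ y. c x1 * ((\<Prod>s\<in>?S. c (y s)) * TT {1} ?S (\<lambda>s t. w (T.upd (\<lambda>_. x1) ?S y s) (T.upd (\<lambda>_. x1) ?S y t))) \<partial>(PiM ?S (\<lambda>_. M)))"
      proof (rule nn_integral_mono)
        fix y :: "nat \<Rightarrow> 'a"
        let ?z = "y(1 := x1)"
        have e1: "ennreal ((\<Prod>i = 1..n. exp (2 * b (?z i))) *
             (\<Sum>G\<in>trees n. \<Prod>e\<in>G. cmod (\<zeta> (?z (Min e)) (?z (Max e)))))
           = (\<Prod>i = 1..n. c (?z i)) * (\<Sum>G\<in>trees n. \<Prod>e\<in>G. ennreal (cmod (\<zeta> (?z (Min e)) (?z (Max e)))))"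
          unfolding c_def
          by (simp add: ennreal_mult prod_nonneg sum_nonneg prod_ennreal sum_ennreal)
        have e2: "(\<Prod>i = 1..n. c (?z i)) = c x1 * (\<Prod>s\<in>?S. c (y s))"
        proof -
          have "{1..n} = insert 1 ?S" using n by auto
          then show ?thesis by simp
        qed
        have e3: "(\<Sum>G\<in>trees n. \<Prod>e\<in>G. ennreal (cmod (\<zeta> (?z (Min e)) (?z (Max e)))))
            \<le> TT {1} ?S (\<lambda>s t. ennreal (cmod (\<zeta> (?z (Min {s, t})) (?z (Max {s, t})))))"
          by (rule trees_le_TT[OF n])
        have e4: "TT {1} ?S (\<lambda>s t. ennreal (cmod (\<zeta> (?z (Min {s, t})) (?z (Max {s, t})))))
           = TT {1} ?S (\<lambda>s t. w (T.upd (\<lambda>_. x1) ?S y s) (T.upd (\<lambda>_. x1) ?S y t))"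
        proof (rule T.TT_cong)
          fix s t assume s: "s \<in> ?S" and t: "t \<in> {1} \<union> ?S"
          have zu: "?z i = T.upd (\<lambda>_. x1) ?S y i" if "i \<in> {1} \<union> ?S" for i
            using that by (auto simp: T.upd_def)
          have "cmod (\<zeta> (?z (Min {s, t})) (?z (Max {s, t}))) = cmod (\<zeta> (?z s) (?z t))"
            by (cases "s \<le> t") (auto simp: min_def max_def \<zeta>_sym)
          then show "ennreal (cmod (\<zeta> (?z (Min {s, t})) (?z (Max {s, t})))) = w (T.upd (\<lambda>_. x1) ?S y s) (T.upd (\<lambda>_. x1) ?S y t)"
            unfolding w_def using zu[of s] zu[of t] s t by auto
        qed
        show "ennreal ((\<Prod>i = 1..n. exp (2 * b (?z i))) *
             (\<Sum>G\<in>trees n. \<Prod>e\<in>G. cmod (\<zeta> (?z (Min e)) (?z (Max e)))))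
          \<le> c x1 * ((\<Prod>s\<in>?S. c (y s)) * TT {1} ?S (\<lambda>s t. w (T.upd (\<lambda>_. x1) ?S y s) (T.upd (\<lambda>_. x1) ?S y t)))"
          unfolding e1 e2 e4[symmetric] mult.assoc by (intro mult_left_mono e3) auto
      qed
      also have "\<dots> = c x1 * T.II {1} ?S (\<lambda>_. x1)"
      proof -
        have "(\<lambda>y. (\<Prod>s\<in>?S. c (y s)) * TT {1} ?S (\<lambda>s t. w (T.upd (\<lambda>_. x1) ?S y s) (T.upd (\<lambda>_. x1) ?S y t)))
            \<in> borel_measurable (PiM ?S (\<lambda>_. M))"
        proof -
          have m1: "(\<lambda>y. TT {1} ?S (\<lambda>s t. w (T.upd (\<lambda>_. x1) ?S y s) (T.upd (\<lambda>_. x1) ?S y t))) \<in> borel_measurable (PiM ?S (\<lambda>_. M))"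
            by (rule T.TT_meas) (use T.upd_meas[of "{1}" "\<lambda>_. x1"] x1sp in auto)
          have m3: "(\<lambda>y. \<Prod>s\<in>?S. c (y s)) \<in> borel_measurable (PiM ?S (\<lambda>_. M))"
            by (intro borel_measurable_prod_ennreal T.c_meas') auto
          show ?thesis using m1 m3 by measurable
        qed
        then show ?thesis unfolding T.II_def by (rule nn_integral_cmult)
      qed
      also have "\<dots> \<le> c x1 * T.J (card ?S) (card {1::nat}) (\<lambda>j. x1)"
      proof (rule mult_left_mono)
        have e: "{..<card {1::nat}} = {0}" by auto
        have bij: "bij_betw (\<lambda>_. 1::nat) {..<card {1::nat}} {1}" unfolding e by (simp add: bij_betw_def)
        show "T.II {1} ?S (\<lambda>_. x1) \<le> T.J (card ?S) (card {1::nat}) (\<lambda>j. x1)"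
          using T.L1[of ?S "{1}" "\<lambda>_. 1" "\<lambda>_. x1"] bij x1sp by auto
      qed simp
      also have "\<dots> = c x1 * T.J (n - 1) 1 (\<lambda>_. x1)" by simp
      finally show ?thesis .
    qed
    have "K M \<zeta> b N x1 \<le> (\<Sum>n = 1..N. ennreal (1 / fact (n - 1)) * (c x1 * T.J (n - 1) 1 (\<lambda>_. x1)))"
      unfolding K_def by (intro sum_mono mult_left_mono hterm) auto
    also have "\<dots> = c x1 * (\<Sum>m\<in>{..N - 1}. ennreal (1 / fact m) * T.J m 1 (\<lambda>_. x1))"
      using sum_shift1[OF N, of "\<lambda>m. ennreal (1 / fact m) * (c x1 * T.J m 1 (\<lambda>_. x1))"]
      by (simp add: sum_distrib_left mult_ac)
    also have "\<dots> \<le> c x1 * (\<Prod>j<(1::nat). A ((\<lambda>_. x1) j))"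
    proof (rule mult_left_mono)
      show "(\<Sum>m\<in>{..N - 1}. ennreal (1 / fact m) * T.J m 1 (\<lambda>_. x1)) \<le> (\<Prod>j<(1::nat). A ((\<lambda>_. x1) j))"
        using T.L2[OF Am hA, where N="N - 1" and k=1 and z="\<lambda>_. x1"] by (simp add: lessThan_Suc)
    qed simp
    also have "\<dots> = ennreal (exp (a x1 + 2 * b x1))"
      using x1 unfolding c_def A_def by (simp add: ennreal_mult[symmetric] exp_add mult_ac)
    finally show "K M \<zeta> b N x1 \<le> ennreal (exp (a x1 + 2 * b x1))" .
  qed
qed


end
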